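(* For every finite rooted forest $F$, the sequence of coefficients of the descent polynomial $A_F(q)$ is unimodal, i.e. writing $A_F(q)=\sum_{k=0}^{e}a_kq^k$ (with $e$ the number of edges of $F$), there is an index $j$ with $a_0\le a_1\le\cdots\le a_j\ge a_{j+1}\ge\cdots\ge a_e$.
   Context: A rooted forest $F$ is a finite disjoint union of rooted trees; each non-root vertex $v$ has a unique parent. A labeling of $F$ with $n$ vertices is a bijection $w: V(F)\to\{1,\dots,n\}$; $\mathcal{W}(F)$ denotes the set of all $n!$ labelings. The descent set is $\mathrm{Des}(F,w)=\{v\in V(F): v \text{ has a parent } u \text{ and } w(v)>w(u)\}$, and $\mathrm{des}(F,w)=|\mathrm{Des}(F,w)|$. The descent polynomial is $A_F(q)=\sum_{w\in\mathcal{W}(F)} q^{\mathrm{des}(F,w)}$. *)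

theory Defs
  imports Main
begin

text \<open>Roots are vertices with par v = None; each non-root has a unique parent in V,
  and following parents never cycles (so every vertex leads to a root).\<close>
definition rooted_forest :: "'a set \<Rightarrow> ('a \<Rightarrow> 'a option) \<Rightarrow> bool" where
  "rooted_forest V par \<longleftrightarrow> finite V
     \<and> (\<forall>v\<in>V. \<forall>u. par v = Some u \<longrightarrow> u \<in> V)
     \<and> acyclic {(v, u). v \<in> V \<and> par v = Some u}"

definition labelings :: "'a set \<Rightarrow> ('a \<Rightarrow> nat) set" where
  "labelings V = {w. bij_betw w V {1..card V} \<and> (\<forall>v. v \<notin> V \<longrightarrow> w v = 0)}"

definition descent_set :: "'a set \<Rightarrow> ('a \<Rightarrow> 'a option) \<Rightarrow> ('a \<Rightarrow> nat) \<Rightarrow> 'a set" where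
  "descent_set V par w = {v \<in> V. \<exists>u. par v = Some u \<and> w v > w u}"

definition des :: "'a set \<Rightarrow> ('a \<Rightarrow> 'a option) \<Rightarrow> ('a \<Rightarrow> nat) \<Rightarrow> nat" where
  "des V par w = card (descent_set V par w)"

definition num_edges :: "'a set \<Rightarrow> ('a \<Rightarrow> 'a option) \<Rightarrow> nat" where
  "num_edges V par = card {v \<in> V. par v \<noteq> None}"

definition descent_coeff :: "'a set \<Rightarrow> ('a \<Rightarrow> 'a option) \<Rightarrow> nat \<Rightarrow> nat" where
  "descent_coeff V par k = card {w \<in> labelings V. des V par w = k}"

definition unimodal_upto :: "(nat \<Rightarrow> nat) \<Rightarrow> nat \<Rightarrow> bool" where
  "unimodal_upto a e \<longleftrightarrow> (\<exists>j\<le>e. (\<forall>i. i < j \<longrightarrow> a i \<le> a (Suc i))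
                                  \<and> (\<forall>i. j \<le> i \<and> i < e \<longrightarrow> a i \<ge> a (Suc i)))"

end

theory Submission
  imports Defs "HOL-Combinatorics.Transposition"
begin


definition SU :: "int \<Rightarrow> (int \<Rightarrow> nat) \<Rightarrow> bool" where
  "SU d b \<longleftrightarrow> (\<forall>k. b k = b (d - k)) \<and> (\<forall>k. k < 0 \<longrightarrow> b k = 0)
      \<and> (\<forall>k. 2*k+2 \<le> d \<longrightarrow> b k \<le> b (k+1))"

lemma SU_mono:
  assumes "SU d b" "i \<le> j" "2*j \<le> d"
  shows "b i \<le> b j"
proof -
  have step: "\<And>k. 2*k+2 \<le> d \<Longrightarrow> b k \<le> b (k+1)" using assms(1) unfolding SU_def by blast
  have "\<forall>j. nat (j - i) = n \<and> i \<le> j \<and> 2*j \<le> d \<longrightarrow> b i \<le> b j" for n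
  proof (induction n)
    case 0
    then show ?case by auto
  next
    case (Suc n)
    show ?case
    proof (intro allI impI)
      fix j' assume h: "nat (j' - i) = Suc n \<and> i \<le> j' \<and> 2*j' \<le> d"
      have h2: "nat ((j' - 1) - i) = n \<and> i \<le> j' - 1 \<and> 2*(j'-1) \<le> d" using h by auto
      have "b i \<le> b (j' - 1)" using Suc.IH h2 by blast
      also have "b (j'-1) \<le> b j'" using step[of "j'-1"] h by simp
      finally show "b i \<le> b j'" .
    qed
  qed
  then show ?thesis using assms by blast
qed

lemma SU_le:
  assumes "SU d b" "i \<le> j" "i + j \<le> d"
  shows "b i \<le> b j"
proof (cases "2*j \<le> d")
  case True then show ?thesis using SU_mono assms by blast
next
  case False
  have "b i \<le> b (d - j)" using SU_mono[OF assms(1), of i "d-j"] assms False by auto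
  also have "b (d-j) = b j" using assms(1) unfolding SU_def by (metis diff_diff_cancel)
  finally show ?thesis .
qed

lemma SU_add:
  assumes "SU d a" "SU d b" shows "SU d (\<lambda>k. a k + b k)"
  using assms unfolding SU_def by (auto intro: add_mono)

lemma SU_cancel:
  assumes "SU d (\<lambda>k. c * b k)" "c > 0" shows "SU d b"
  using assms unfolding SU_def by auto

definition win :: "int \<Rightarrow> nat \<Rightarrow> (int \<Rightarrow> nat) \<Rightarrow> int \<Rightarrow> nat" where
  "win lo m b k = (\<Sum>i\<le>m. b (k - lo - int i))"

lemma SU_win:
  assumes "SU d b" "lo \<ge> 0"
  shows "SU (d + 2*lo + int m) (win lo m b)"
  unfolding SU_def
proof (intro conjI allI impI)
  fix k
  have "win lo m b (d + 2*lo + int m - k) = (\<Sum>i\<le>m. b (k - lo - int m + int i))"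
  proof -
    have "win lo m b (d + 2*lo + int m - k) = (\<Sum>i\<le>m. b (d - (k - lo - int m + int i)))"
      unfolding win_def by (intro sum.cong) (auto simp: algebra_simps)
    also have "\<dots> = (\<Sum>i\<le>m. b (k - lo - int m + int i))"
      using assms(1) unfolding SU_def by (metis (no_types))
    finally show ?thesis .
  qed
  also have "\<dots> = win lo m b k"
    unfolding win_def
    by (rule sum.reindex_bij_witness[where i="\<lambda>i. m - i" and j="\<lambda>i. m - i"]) (auto simp: of_nat_diff algebra_simps)
  finally show "win lo m b k = win lo m b (d + 2*lo + int m - k)" by simp
next
  fix k :: int assume "k < 0"
  then show "win lo m b k = 0" using assms unfolding win_def SU_def by auto
next
  fix k :: int assume hk: "2*k+2 \<le> d + 2*lo + int m"
  have A: "win lo m b (k+1) = b (k+1-lo) + (\<Sum>i<m. b (k - lo - int i))"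
    unfolding win_def
    by (subst sum.atMost_shift) (auto simp: algebra_simps)
  have B: "win lo m b k = (\<Sum>i<m. b (k - lo - int i)) + b (k - lo - int m)"
    unfolding win_def by (simp add: lessThan_Suc_atMost[symmetric])
  have "b (k - lo - int m) \<le> b (k+1-lo)"
    using SU_le[OF assms(1), of "k - lo - int m" "k+1-lo"] hk assms(2) by auto
  then show "win lo m b k \<le> win lo m b (k+1)" using A B by simp
qed

definition ext :: "(nat \<Rightarrow> nat) \<Rightarrow> int \<Rightarrow> nat" where
  "ext a k = (if k < 0 then 0 else a (nat k))"

lemma SU_unimodal:
  assumes "SU (int e) (ext a)"
  shows "unimodal_upto a e"
  unfolding unimodal_upto_def
proof (intro exI[of _ "e div 2"] conjI allI impI)
  show "e div 2 \<le> e" by simp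
next
  fix i assume "i < e div 2"
  then have "2 * int i + 2 \<le> int e" by linarith
  then have "ext a (int i) \<le> ext a (int i + 1)" using assms unfolding SU_def by blast
  then show "a i \<le> a (Suc i)" unfolding ext_def by (simp add: Suc_as_int)
next
  fix i assume h: "e div 2 \<le> i \<and> i < e"
  have sym: "\<And>k. ext a k = ext a (int e - k)" using assms unfolding SU_def by blast
  have "ext a (int e - int i - 1) \<le> ext a (int e - int i)"
  proof (cases "2 * (int e - int i - 1) + 2 \<le> int e")
    case True
    then show ?thesis using assms unfolding SU_def by (metis diff_add_cancel)
  next
    case False
    then have "int e = 2 * int i + 1" using h by presburger
    then show ?thesis using sym[of "int e - int i - 1"] by (simp add: algebra_simps)
  qed
  then have "ext a (int (Suc i)) \<le> ext a (int i)"
    using sym[of "int (Suc i)"] sym[of "int i"] by (simp add: algebra_simps)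
  moreover have "nat (int (Suc i)) = Suc i" by simp
  ultimately show "a (Suc i) \<le> a i" unfolding ext_def by (metis of_nat_0_le_iff not_less nat_int)
qed



lemma count_rank:
  fixes f :: "'a \<Rightarrow> nat"
  assumes "finite N" "N \<noteq> {}" "inj_on f N" "x \<notin> f ` N"
  shows "card {y\<in>N. card {z\<in>N. f y < f z} + (if x < f y then 1 else 0) = j}
         = (if 1 \<le> j \<and> j < card N then 1 else 0) + (if j = card {z\<in>N. x < f z} then 1 else 0)"
  using assms
proof (induction "card N" arbitrary: N j rule: less_induct)
  case less
  have "Max (f ` N) \<in> f ` N" using Max_in[of "f ` N"] less.prems by auto
  then obtain M where MN: "M \<in> N" and Mmax: "f M = Max (f ` N)" by (metis imageE)
  have lt: "f y < f M" if "y \<in> N" "y \<noteq> M" for y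
  proof -
    have "f y \<le> f M" using Mmax that less.prems(1) by simp
    moreover have "f y \<noteq> f M" using less.prems(3) that MN by (meson inj_on_contraD)
    ultimately show ?thesis by simp
  qed
  have cM: "card {z\<in>N. f M < f z} = 0"
    using lt less.prems(1) by (auto simp: card_eq_0_iff dest: lt)
  show ?case
  proof (cases "N = {M}")
    case True
    have e1: "{y\<in>N. card {z\<in>N. f y < f z} + (if x < f y then 1 else 0) = j}
        = (if (if x < f M then 1 else 0) = j then {M} else {})"
    proof -
      have h: "{z. z = M \<and> f M < f z} = {}" by auto
      show ?thesis
        by (rule set_eqI) (auto simp: True h)
    qed
    have e2: "{z\<in>N. x < f z} = (if x < f M then {M} else {})" using True by auto
    show ?thesis unfolding e1 e2 using True by auto
  next
    case False
    define N' where "N' = N - {M}"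
    have N'ne: "N' \<noteq> {}" using False MN N'_def by auto
    have finN': "finite N'" using less.prems(1) N'_def by simp
    have cpos: "0 < card N'" using finN' N'ne by (simp add: card_gt_0_iff)
    have tle: "card {z\<in>N'. x < f z} \<le> card N'" using finN' by (intro card_mono) auto
    have cardN: "card N = Suc (card N')" using MN less.prems(1) N'_def by (metis card_Suc_Diff1)
    have injN': "inj_on f N'" using less.prems(3) N'_def by (simp add: inj_on_diff)
    have xN': "x \<notin> f ` N'" using less.prems(4) N'_def by auto
    have cy: "card {z\<in>N. f y < f z} = Suc (card {z\<in>N'. f y < f z})" if "y \<in> N'" for y
    proof -
      have "{z\<in>N. f y < f z} = insert M {z\<in>N'. f y < f z}" using that lt MN N'_def by auto
      then show ?thesis using finN' N'_def by simp
    qed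
    have IH: "card {y\<in>N'. card {z\<in>N'. f y < f z} + (if x < f y then 1 else 0) = j'}
         = (if 1 \<le> j' \<and> j' < card N' then 1 else 0) + (if j' = card {z\<in>N'. x < f z} then 1 else 0)" for j'
      using less.hyps[of N' j'] cardN finN' N'ne injN' xN' by simp
    let ?c = "\<lambda>y. card {z\<in>N. f y < f z} + (if x < f y then 1 else 0)"
    let ?c' = "\<lambda>y. card {z\<in>N'. f y < f z} + (if x < f y then 1 else 0)"
    have split: "{y\<in>N. ?c y = j} = {y\<in>N'. Suc (?c' y) = j} \<union> (if ?c M = j then {M} else {})"
    proof (rule set_eqI)
      fix y
      show "y \<in> {y\<in>N. ?c y = j} \<longleftrightarrow> y \<in> {y\<in>N'. Suc (?c' y) = j} \<union> (if ?c M = j then {M} else {})"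
      proof (cases "y = M")
        case True then show ?thesis using MN N'_def by auto
      next
        case False
        then have "y \<in> N \<longleftrightarrow> y \<in> N'" using N'_def by auto
        then show ?thesis using cy[of y] False by auto
      qed
    qed
    have disj: "{y\<in>N'. Suc (?c' y) = j} \<inter> (if ?c M = j then {M} else {}) = {}" using N'_def by auto
    have c1: "card {y\<in>N. ?c y = j} = card {y\<in>N'. Suc (?c' y) = j} + (if ?c M = j then 1 else 0)"
      unfolding split using disj finN' by (subst card_Un_disjoint) auto
    have c2: "card {y\<in>N'. Suc (?c' y) = j} = (if j = 0 then 0 else
        (if 1 \<le> j - 1 \<and> j - 1 < card N' then 1 else 0) + (if j - 1 = card {z\<in>N'. x < f z} then 1 else 0))"
    proof (cases "j = 0")
      case True then show ?thesis by simp
    next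
      case False
      then have "{y\<in>N'. Suc (?c' y) = j} = {y\<in>N'. ?c' y = j - 1}" by auto
      then show ?thesis using IH[of "j-1"] False by simp
    qed
    show ?thesis
    proof (cases "x < f M")
      case True
      have t: "card {z\<in>N. x < f z} = Suc (card {z\<in>N'. x < f z})"
      proof -
        have "{z\<in>N. x < f z} = insert M {z\<in>N'. x < f z}" using True MN N'_def by auto
        then show ?thesis using finN' N'_def by simp
      qed
      show ?thesis unfolding c1 c2 using True cM t cardN cpos tle by (cases j) simp_all
    next
      case False
      have xM: "f M < x" using False less.prems(4) MN by (metis image_eqI nat_neq_iff)
      have e0: "{z\<in>N. x < f z} = {}"
      proof (rule ccontr)
        assume "{z\<in>N. x < f z} \<noteq> {}"
        then obtain z where "z \<in> N" "x < f z" by auto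
        then have "f z \<le> f M" using Mmax less.prems(1) by simp
        then show False using xM \<open>x < f z\<close> by simp
      qed
      have t0: "card {z\<in>N. x < f z} = 0" using e0 by (metis card.empty)
      have e0': "{z\<in>N'. x < f z} = {}" using e0 N'_def by blast
      have t0': "card {z\<in>N'. x < f z} = 0" using e0' by (metis card.empty)
      show ?thesis unfolding c1 c2 using False cM t0 t0' cardN cpos tle by (cases j) simp_all
    qed
  qed
qed



lemma lab_finite: "finite V \<Longrightarrow> finite (labelings V)"
proof -
  assume fin: "finite V"
  have "labelings V \<subseteq> {f. \<forall>x. (x \<in> V \<longrightarrow> f x \<in> {1..card V}) \<and> (x \<notin> V \<longrightarrow> f x = 0)}"
    unfolding labelings_def bij_betw_def by auto
  then show ?thesis using finite_set_of_finite_funs[OF fin, of "{1..card V}" 0] finite_subset by blast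
qed

lemma lab_inj: "w \<in> labelings V \<Longrightarrow> inj_on w V"
  unfolding labelings_def bij_betw_def by auto

lemma lab_swap:
  assumes "w \<in> labelings V" "u \<in> V" "y \<in> V"
  shows "w \<circ> transpose u y \<in> labelings V"
proof -
  have "bij_betw (Fun.swap u y w) V {1..card V}"
    using assms bij_betw_swap_iff[of u V y w "{1..card V}"] unfolding labelings_def by auto
  moreover have "\<forall>v. v \<notin> V \<longrightarrow> (w \<circ> transpose u y) v = 0"
    using assms unfolding labelings_def by (auto simp: transpose_def)
  ultimately show ?thesis unfolding labelings_def by simp
qed

lemma des_split:
  assumes "finite V" "N \<subseteq> V" "\<forall>v\<in>N. par0 v = None" "\<forall>v\<in>V-N. par1 v = par0 v"
  shows "des V par1 w = des V par0 w + card {x\<in>N. \<exists>z. par1 x = Some z \<and> w z < w x}"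
proof -
  have e: "descent_set V par1 w = descent_set V par0 w \<union> {x\<in>N. \<exists>z. par1 x = Some z \<and> w z < w x}"
  proof (rule set_eqI)
    fix v
    show "v \<in> descent_set V par1 w \<longleftrightarrow> v \<in> descent_set V par0 w \<union> {x\<in>N. \<exists>z. par1 x = Some z \<and> w z < w x}"
      using assms unfolding descent_set_def by (cases "v \<in> N") auto
  qed
  have d: "descent_set V par0 w \<inter> {x\<in>N. \<exists>z. par1 x = Some z \<and> w z < w x} = {}"
    using assms(3) unfolding descent_set_def by auto
  have f1: "finite (descent_set V par0 w)" using assms(1) unfolding descent_set_def by simp
  have "finite N" using assms(1,2) finite_subset by blast
  then have f2: "finite {x\<in>N. \<exists>z. par1 x = Some z \<and> w z < w x}" by simp
  show ?thesis unfolding des_def e using card_Un_disjoint[OF f1 f2 d] by simp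
qed

lemma card_transpose_filter:
  assumes "u \<in> N" "y \<in> N"
  shows "card {x\<in>N. P (transpose u y x)} = card {x\<in>N. P x}"
proof -
  have "{x\<in>N. P (transpose u y x)} = transpose u y ` {x\<in>N. P x}"
  proof (rule set_eqI)
    fix x
    show "x \<in> {x\<in>N. P (transpose u y x)} \<longleftrightarrow> x \<in> transpose u y ` {x\<in>N. P x}"
    proof
      assume h: "x \<in> {x\<in>N. P (transpose u y x)}"
      have "transpose u y x \<in> N" using h assms by (auto simp: transpose_def)
      then show "x \<in> transpose u y ` {x\<in>N. P x}" using h
        by (intro image_eqI[of _ _ "transpose u y x"]) auto
    next
      assume "x \<in> transpose u y ` {x\<in>N. P x}"
      then obtain x' where "x' \<in> N" "P x'" "x = transpose u y x'" by auto
      then show "x \<in> {x\<in>N. P (transpose u y x)}" using assms by (auto simp: transpose_def)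
    qed
  qed
  then show ?thesis by (simp add: card_image inj_on_transpose)
qed

definition intern :: "'a set \<Rightarrow> ('a \<Rightarrow> 'a option) \<Rightarrow> 'a set" where
  "intern V par = {v\<in>V. par v \<noteq> None \<and> (\<exists>y\<in>V. par y = Some v)}"

locale pend =
  fixes V :: "'a set" and par :: "'a \<Rightarrow> 'a option" and u :: 'a
  assumes forest: "rooted_forest V par" and uV: "u \<in> V"
    and Cne: "\<exists>c\<in>V. par c = Some u"
    and leaves: "\<And>c y. c \<in> V \<Longrightarrow> par c = Some u \<Longrightarrow> y \<in> V \<Longrightarrow> par y \<noteq> Some c"
begin

definition C where "C = {v\<in>V. par v = Some u}"
definition N where "N = insert u C"
definition parG where "parG v = (if v \<in> N then None else par v)"

abbreviation Rel where "Rel \<equiv> {(v, z). v \<in> V \<and> par v = Some z}"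

lemma finV: "finite V" using forest unfolding rooted_forest_def by simp
lemma parV: "v \<in> V \<Longrightarrow> par v = Some z \<Longrightarrow> z \<in> V" using forest unfolding rooted_forest_def by blast
lemma acyc: "acyclic Rel" using forest unfolding rooted_forest_def by simp

lemma no_self: "v \<in> V \<Longrightarrow> par v \<noteq> Some v"
  using acyc unfolding acyclic_def by blast

lemma no_2cycle: "v \<in> V \<Longrightarrow> z \<in> V \<Longrightarrow> par v = Some z \<Longrightarrow> par z \<noteq> Some v"
proof
  assume h: "v \<in> V" "z \<in> V" "par v = Some z" "par z = Some v"
  then have "(v, z) \<in> Rel\<^sup>+" "(z, v) \<in> Rel\<^sup>+" by auto
  then have "(v, v) \<in> Rel\<^sup>+" by simp
  then show False using acyc unfolding acyclic_def by blast
qed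

lemma uC: "u \<notin> C" using no_self uV unfolding C_def by auto
lemma CV: "C \<subseteq> V" unfolding C_def by auto
lemma NV: "N \<subseteq> V" using CV uV unfolding N_def by auto
lemma finC: "finite C" using CV finV finite_subset by auto
lemma finN: "finite N" using NV finV finite_subset by auto
lemma Cne': "C \<noteq> {}" using Cne unfolding C_def by auto
lemma cardN: "card N = Suc (card C)" unfolding N_def using uC finC by simp
lemma cardCpos: "card C > 0" using Cne' finC by (simp add: card_gt_0_iff)

lemma outside: "v \<in> V \<Longrightarrow> v \<notin> N \<Longrightarrow> par v = Some z \<Longrightarrow> z \<notin> N"
proof
  assume h: "v \<in> V" "v \<notin> N" "par v = Some z" "z \<in> N"
  show False
  proof (cases "z = u")
    case True then show False using h unfolding N_def C_def by auto
  next
    case False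
    then have "z \<in> V" "par z = Some u" using h unfolding N_def C_def by auto
    then show False using leaves h by blast
  qed
qed

lemma parent_out: "par u = Some p \<Longrightarrow> p \<in> V \<and> p \<notin> N"
proof -
  assume h: "par u = Some p"
  have pV: "p \<in> V" using parV uV h by blast
  have "p \<noteq> u" using no_self uV h by auto
  moreover have "p \<notin> C" using no_2cycle[OF uV pV h] unfolding C_def by auto
  ultimately show ?thesis using pV unfolding N_def by auto
qed


lemma parG_None: "v \<in> N \<Longrightarrow> parG v = None" unfolding parG_def by simp
lemma parG_out: "v \<notin> N \<Longrightarrow> parG v = par v" unfolding parG_def by simp

lemma parG_forest: "rooted_forest V parG"
proof -
  have "{(v, z). v \<in> V \<and> parG v = Some z} \<subseteq> Rel" unfolding parG_def by (auto split: if_splits)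
  then have "acyclic {(v, z). v \<in> V \<and> parG v = Some z}" using acyc acyclic_subset by blast
  moreover have "\<forall>v\<in>V. \<forall>z. parG v = Some z \<longrightarrow> z \<in> V" using parV unfolding parG_def by auto
  ultimately show ?thesis using finV unfolding rooted_forest_def by simp
qed

lemma desG_swap:
  assumes "y \<in> N"
  shows "des V parG (w \<circ> transpose u y) = des V parG w"
proof -
  have uN: "u \<in> N" unfolding N_def by simp
  have "descent_set V parG (w \<circ> transpose u y) = descent_set V parG w"
  proof (rule set_eqI)
    fix v
    show "v \<in> descent_set V parG (w \<circ> transpose u y) \<longleftrightarrow> v \<in> descent_set V parG w"
    proof (cases "v \<in> V \<and> v \<notin> N")
      case True
      then have vt: "transpose u y v = v" using uN assms by (auto simp: transpose_def)
      have zt: "transpose u y z = z" if "par v = Some z" for z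
      proof -
        have "z \<notin> N" using outside True that by blast
        then show ?thesis using uN assms by (auto simp: transpose_def)
      qed
      show ?thesis using True vt zt unfolding descent_set_def parG_def by auto
    next
      case False
      then show ?thesis unfolding descent_set_def parG_def by auto
    qed
  qed
  then show ?thesis unfolding des_def by simp
qed

definition cw where
  "cw w y = card {x\<in>N. w y < w x} + (case par u of None \<Rightarrow> 0 | Some p \<Rightarrow> if w p < w y then 1 else 0)"

lemma desF_swap:
  assumes "y \<in> N"
  shows "des V par (w \<circ> transpose u y) = des V parG w + cw w y"
proof -
  define w' where "w' = w \<circ> transpose u y"
  have uN: "u \<in> N" unfolding N_def by simp
  have s1: "des V par w' = des V parG w' + card {x\<in>N. \<exists>z. par x = Some z \<and> w' z < w' x}"
    by (rule des_split[OF finV NV]) (auto simp: parG_def)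
  have wu: "w' u = w y" unfolding w'_def by simp
  have S: "{x\<in>N. \<exists>z. par x = Some z \<and> w' z < w' x}
      = {x\<in>C. w y < w' x} \<union> (if (\<exists>z. par u = Some z \<and> w' z < w' u) then {u} else {})"
    using wu unfolding N_def C_def by auto
  have cS: "card {x\<in>N. \<exists>z. par x = Some z \<and> w' z < w' x}
      = card {x\<in>C. w y < w' x} + (if (\<exists>z. par u = Some z \<and> w' z < w' u) then 1 else 0)"
    unfolding S using uC finC by (auto simp: card_insert_if)
  have c1: "{x\<in>C. w y < w' x} = {x\<in>N. w y < w (transpose u y x)}"
    using wu unfolding N_def w'_def by auto
  have c2: "card {x\<in>N. w y < w (transpose u y x)} = card {x\<in>N. w y < w x}"
    by (rule card_transpose_filter[OF uN assms])
  have c3: "(if (\<exists>z. par u = Some z \<and> w' z < w' u) then 1 else 0)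
      = (case par u of None \<Rightarrow> 0 | Some p \<Rightarrow> if w p < w y then 1 else 0)"
  proof (cases "par u")
    case None then show ?thesis by simp
  next
    case (Some p)
    then have "p \<notin> N" using parent_out by blast
    then have "w' p = w p" unfolding w'_def using uN assms by (auto simp: transpose_def)
    then show ?thesis using Some wu by simp
  qed
  have "des V parG w' = des V parG w" unfolding w'_def by (rule desG_swap[OF assms])
  then show ?thesis unfolding cw_def using s1 cS c1 c2 c3 w'_def by simp
qed

definition parS where "parS v = (if v \<in> C then par u else par v)"

lemma desS:
  assumes "par u = Some p"
  shows "des V parS w = des V parG w + card {x\<in>N. w p < w x}"
proof -
  have "des V parS w = des V parG w + card {x\<in>N. \<exists>z. parS x = Some z \<and> w z < w x}"
    by (rule des_split[OF finV NV]) (auto simp: parG_def parS_def N_def)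
  moreover have "{x\<in>N. \<exists>z. parS x = Some z \<and> w z < w x} = {x\<in>N. w p < w x}"
    using assms uC unfolding parS_def N_def by auto
  ultimately show ?thesis by simp
qed

lemma parS_forest:
  assumes "par u = Some p"
  shows "rooted_forest V parS"
proof -
  have pV: "p \<in> V" using parent_out assms by blast
  have "{(v, z). v \<in> V \<and> parS v = Some z} \<subseteq> Rel\<^sup>+"
  proof
    fix x assume "x \<in> {(v, z). v \<in> V \<and> parS v = Some z}"
    then obtain v z where x: "x = (v, z)" "v \<in> V" "parS v = Some z" by auto
    show "x \<in> Rel\<^sup>+"
    proof (cases "v \<in> C")
      case True
      then have a: "(v, u) \<in> Rel" "(u, p) \<in> Rel" "z = p" using x assms uV unfolding parS_def C_def by auto
      then have "(v, u) \<in> Rel\<^sup>+" "(u, p) \<in> Rel\<^sup>+" by (auto intro: r_into_trancl')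
      then show ?thesis using x a(3) by (meson trancl_trans)
    next
      case False
      then show ?thesis using x unfolding parS_def by auto
    qed
  qed
  moreover have "acyclic (Rel\<^sup>+)" using acyc by (simp add: acyclic_def)
  ultimately have "acyclic {(v, z). v \<in> V \<and> parS v = Some z}" using acyclic_subset by blast
  moreover have "\<forall>v\<in>V. \<forall>z. parS v = Some z \<longrightarrow> z \<in> V" using parV pV assms unfolding parS_def by auto
  ultimately show ?thesis using finV unfolding rooted_forest_def by simp
qed

lemma edgesG: "num_edges V par = num_edges V parG + card C + (if par u = None then 0 else 1)"
proof -
  have e: "{v\<in>V. par v \<noteq> None} = {v\<in>V. parG v \<noteq> None} \<union> C \<union> (if par u = None then {} else {u})"
    using uV unfolding parG_def N_def C_def by auto
  have f1: "finite {v\<in>V. parG v \<noteq> None}" using finV by simp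
  have d1: "{v\<in>V. parG v \<noteq> None} \<inter> C = {}" unfolding parG_def N_def by auto
  have d2: "({v\<in>V. parG v \<noteq> None} \<union> C) \<inter> (if par u = None then {} else {u}) = {}"
    using uC unfolding parG_def N_def by auto
  show ?thesis unfolding num_edges_def e
    using card_Un_disjoint[OF _ _ d2] card_Un_disjoint[OF f1 finC d1] f1 finC by auto
qed

lemma edgesS: "par u \<noteq> None \<Longrightarrow> num_edges V parS = num_edges V par"
  unfolding num_edges_def parS_def C_def by (rule arg_cong[where f=card]) auto

lemma internG: "intern V parG \<subseteq> intern V par"
  unfolding intern_def parG_def by (auto split: if_splits)

lemma internG_u: "par u \<noteq> None \<Longrightarrow> u \<in> intern V par - intern V parG"
  using uV Cne unfolding intern_def parG_def N_def by auto

lemma internS: "par u \<noteq> None \<Longrightarrow> intern V parS \<subseteq> intern V par - {u}"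
proof
  fix v assume h: "par u \<noteq> None" "v \<in> intern V parS"
  then have vV: "v \<in> V" and pv: "parS v \<noteq> None" and ex: "\<exists>y\<in>V. parS y = Some v" unfolding intern_def by auto
  have "par v \<noteq> None" using pv h(1) unfolding parS_def C_def by (auto split: if_splits)
  moreover have "\<exists>y\<in>V. par y = Some v"
  proof -
    obtain y where y: "y \<in> V" "parS y = Some v" using ex by auto
    show ?thesis
    proof (cases "y \<in> C")
      case True then have "par u = Some v" using y unfolding parS_def by simp
      then show ?thesis using uV by blast
    next
      case False then show ?thesis using y unfolding parS_def by auto
    qed
  qed
  moreover have "v \<noteq> u"
  proof
    assume "v = u"
    obtain y where y: "y \<in> V" "parS y = Some v" using ex by auto
    show False
    proof (cases "y \<in> C")
      case True then have "par u = Some u" using y \<open>v = u\<close> unfolding parS_def by simp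
      then show False using no_self uV by blast
    next
      case False then have "par y = Some u" using y \<open>v = u\<close> unfolding parS_def by simp
      then show False using False y unfolding C_def by auto
    qed
  qed
  ultimately show "v \<in> intern V par - {u}" using vV unfolding intern_def by auto
qed
end



lemma card_filter_sum:
  assumes "finite A"
  shows "card {x\<in>A. P x} = (\<Sum>x\<in>A. if P x then 1 else 0)"
proof -
  have "(\<Sum>x\<in>A. if P x then 1 else 0) = (\<Sum>x\<in>{x\<in>A. P x}. (1::nat))"
    by (rule sum.inter_filter[OF assms, symmetric])
  then show ?thesis by simp
qed

lemma ext_card: "ext (descent_coeff V par) k = card {w \<in> labelings V. int (des V par w) = k}"
proof (cases "k < 0")
  case True
  then have "{w \<in> labelings V. int (des V par w) = k} = {}" by auto
  then show ?thesis using True unfolding ext_def by simp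
next
  case False
  then have "{w \<in> labelings V. int (des V par w) = k} = {w \<in> labelings V. des V par w = nat k}" by auto
  then show ?thesis using False unfolding ext_def descent_coeff_def by simp
qed

lemma win_count:
  assumes "finite A"
  shows "(\<Sum>i\<le>m. card {w\<in>A. int (d w) = k - lo - int i})
       = (\<Sum>w\<in>A. if lo \<le> k - int (d w) \<and> k - int (d w) \<le> lo + int m then 1 else 0)"
proof -
  have "(\<Sum>i\<le>m. card {w\<in>A. int (d w) = k - lo - int i})
      = (\<Sum>i\<le>m. \<Sum>w\<in>A. if int (d w) = k - lo - int i then 1 else 0)"
    using assms by (simp add: card_filter_sum)
  also have "\<dots> = (\<Sum>w\<in>A. \<Sum>i\<le>m. if int (d w) = k - lo - int i then 1 else 0)"
    by (rule sum.swap)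
  also have "\<dots> = (\<Sum>w\<in>A. card {i\<in>{..m}. int (d w) = k - lo - int i})"
    by (intro sum.cong refl) (rule card_filter_sum[symmetric, OF finite_atMost])
  also have "\<dots> = (\<Sum>w\<in>A. if lo \<le> k - int (d w) \<and> k - int (d w) \<le> lo + int m then 1 else 0)"
  proof (intro sum.cong refl)
    fix w
    show "card {i\<in>{..m}. int (d w) = k - lo - int i}
        = (if lo \<le> k - int (d w) \<and> k - int (d w) \<le> lo + int m then 1 else 0)"
    proof (cases "lo \<le> k - int (d w) \<and> k - int (d w) \<le> lo + int m")
      case True
      have "{i\<in>{..m}. int (d w) = k - lo - int i} = {nat (k - lo - int (d w))}"
      proof (rule set_eqI)
        fix i
        show "i \<in> {i\<in>{..m}. int (d w) = k - lo - int i} \<longleftrightarrow> i \<in> {nat (k - lo - int (d w))}"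
          using True by auto
      qed
      then show ?thesis using True by simp
    next
      case False
      then have "{i\<in>{..m}. int (d w) = k - lo - int i} = {}" by auto
      then show ?thesis using False by (simp only: if_not_P card.empty if_False)
    qed
  qed
  finally show ?thesis .
qed

lemma count_rank0:
  fixes f :: "'a \<Rightarrow> nat"
  assumes "finite N" "N \<noteq> {}" "inj_on f N"
  shows "card {y\<in>N. card {z\<in>N. f y < f z} = j} = (if j < card N then 1 else 0)"
proof -
  define x where "x = Suc (Max (f ` N))"
  have le: "f y \<le> Max (f ` N)" if "y \<in> N" for y using assms(1) that by simp
  have xn: "x \<notin> f ` N"
  proof
    assume "x \<in> f ` N"
    then obtain y where "y \<in> N" "x = f y" by auto
    then show False using le[of y] unfolding x_def by simp
  qed
  have lt: "\<not> x < f y" if "y \<in> N" for y using le[OF that] unfolding x_def by simp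
  have e1: "{y\<in>N. card {z\<in>N. f y < f z} + (if x < f y then 1 else 0) = j} = {y\<in>N. card {z\<in>N. f y < f z} = j}"
    using lt by auto
  have e2: "{z\<in>N. x < f z} = {}" using lt by auto
  have cpos: "card N > 0" using assms by (simp add: card_gt_0_iff)
  show ?thesis using count_rank[OF assms xn, of j] unfolding e1 e2 using cpos by auto
qed

context pend
begin

lemma K1:
  "card N * card {w\<in>labelings V. int (des V par w) = k}
     = (\<Sum>w\<in>labelings V. card {y\<in>N. int (des V parG w) + int (cw w y) = k})"
proof -
  have finL: "finite (labelings V)" using lab_finite finV by blast
  have each: "card {w\<in>labelings V. int (des V par (w \<circ> transpose u y)) = k}
      = card {w\<in>labelings V. int (des V par w) = k}" if y: "y \<in> N" for y
  proof -
    have yV: "y \<in> V" using y NV by blast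
    have "bij_betw (\<lambda>w. w \<circ> transpose u y) {w\<in>labelings V. int (des V par (w \<circ> transpose u y)) = k}
        {w\<in>labelings V. int (des V par w) = k}"
      by (rule bij_betw_byWitness[where f'="\<lambda>w. w \<circ> transpose u y"])
         (auto simp: comp_assoc lab_swap yV uV)
    then show ?thesis by (rule bij_betw_same_card)
  qed
  have "card N * card {w\<in>labelings V. int (des V par w) = k}
      = (\<Sum>y\<in>N. card {w\<in>labelings V. int (des V par (w \<circ> transpose u y)) = k})"
    using each by simp
  also have "\<dots> = (\<Sum>y\<in>N. \<Sum>w\<in>labelings V. if int (des V par (w \<circ> transpose u y)) = k then 1 else 0)"
    using finL by (simp add: card_filter_sum)
  also have "\<dots> = (\<Sum>w\<in>labelings V. \<Sum>y\<in>N. if int (des V par (w \<circ> transpose u y)) = k then 1 else 0)"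
    by (rule sum.swap)
  also have "\<dots> = (\<Sum>w\<in>labelings V. card {y\<in>N. int (des V parG w) + int (cw w y) = k})"
  proof (intro sum.cong refl)
    fix w
    have "(\<Sum>y\<in>N. if int (des V par (w \<circ> transpose u y)) = k then 1 else 0)
        = (\<Sum>y\<in>N. if int (des V parG w) + int (cw w y) = k then 1 else 0)"
      by (intro sum.cong refl) (simp add: desF_swap)
    then show "(\<Sum>y\<in>N. if int (des V par (w \<circ> transpose u y)) = k then 1 else (0::nat))
        = card {y\<in>N. int (des V parG w) + int (cw w y) = k}"
      using finN by (simp add: card_filter_sum)
  qed
  finally show ?thesis .
qed

lemma count_nonroot:
  assumes p: "par u = Some p" and w: "w \<in> labelings V"
  shows "card {y\<in>N. int (des V parG w) + int (cw w y) = k}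
    = (if 1 \<le> k - int (des V parG w) \<and> k - int (des V parG w) \<le> int (card C) then 1 else 0)
      + (if k = int (des V parS w) then 1 else 0)"
proof -
  define d where "d = des V parG w"
  have pV: "p \<in> V" and pN: "p \<notin> N" using parent_out p by auto
  have injV: "inj_on w V" using lab_inj w by blast
  have injN: "inj_on w N" using inj_on_subset[OF injV NV] .
  have xn: "w p \<notin> w ` N"
  proof
    assume "w p \<in> w ` N"
    then obtain y where "y \<in> N" "w p = w y" by auto
    then have "p = y" using injV pV NV by (meson inj_onD subsetD)
    then show False using pN \<open>y \<in> N\<close> by simp
  qed
  have Nne: "N \<noteq> {}" unfolding N_def by simp
  have cwe: "cw w y = card {z\<in>N. w y < w z} + (if w p < w y then 1 else 0)" for y
    unfolding cw_def using p by simp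
  have dS: "des V parS w = d + card {z\<in>N. w p < w z}" unfolding d_def by (rule desS[OF p])
  show ?thesis
  proof (cases "k < int d")
    case True
    then have "{y\<in>N. int d + int (cw w y) = k} = {}" by auto
    then show ?thesis using True dS unfolding d_def[symmetric] by auto
  next
    case False
    define j where "j = nat (k - int d)"
    have eqS: "{y\<in>N. int d + int (cw w y) = k} = {y\<in>N. card {z\<in>N. w y < w z} + (if w p < w y then 1 else 0) = j}"
      using False unfolding j_def cwe by auto
    have "card {y\<in>N. int d + int (cw w y) = k}
        = (if 1 \<le> j \<and> j < card N then 1 else 0) + (if j = card {z\<in>N. w p < w z} then 1 else 0)"
      unfolding eqS by (rule count_rank[OF finN Nne injN xn])
    moreover have c1: "(1 \<le> j \<and> j < card N) = (1 \<le> k - int d \<and> k - int d \<le> int (card C))"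
      using False cardN unfolding j_def by auto
    moreover have c2: "(j = card {z\<in>N. w p < w z}) = (k = int (des V parS w))"
      using False dS unfolding j_def by auto
    ultimately show ?thesis unfolding d_def[symmetric] by (simp only:)
  qed
qed

lemma count_root:
  assumes p: "par u = None" and w: "w \<in> labelings V"
  shows "card {y\<in>N. int (des V parG w) + int (cw w y) = k}
    = (if 0 \<le> k - int (des V parG w) \<and> k - int (des V parG w) \<le> int (card C) then 1 else 0)"
proof -
  define d where "d = des V parG w"
  have injV: "inj_on w V" using lab_inj w by blast
  have injN: "inj_on w N" using inj_on_subset[OF injV NV] .
  have Nne: "N \<noteq> {}" unfolding N_def by simp
  have cwe: "cw w y = card {z\<in>N. w y < w z}" for y
    unfolding cw_def using p by simp
  show ?thesis
  proof (cases "k < int d")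
    case True
    then have "{y\<in>N. int d + int (cw w y) = k} = {}" by auto
    then show ?thesis using True unfolding d_def[symmetric] by auto
  next
    case False
    define j where "j = nat (k - int d)"
    have eqS: "{y\<in>N. int d + int (cw w y) = k} = {y\<in>N. card {z\<in>N. w y < w z} = j}"
      using False unfolding j_def cwe by auto
    have "card {y\<in>N. int d + int (cw w y) = k} = (if j < card N then 1 else 0)"
      unfolding eqS by (rule count_rank0[OF finN Nne injN])
    moreover have c1: "(j < card N) = (0 \<le> k - int d \<and> k - int d \<le> int (card C))"
      using False cardN unfolding j_def by auto
    ultimately show ?thesis unfolding d_def[symmetric] by (simp only:)
  qed
qed

lemma step_nonroot:
  assumes p: "par u = Some p"
    and IG: "SU (int (num_edges V parG)) (ext (descent_coeff V parG))"
    and IS: "SU (int (num_edges V parS)) (ext (descent_coeff V parS))"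
  shows "SU (int (num_edges V par)) (ext (descent_coeff V par))"
proof -
  have finL: "finite (labelings V)" using lab_finite finV by blast
  define m where "m = card C - 1"
  have cm: "int (card C) = 1 + int m" using cardCpos unfolding m_def by simp
  have id: "card N * ext (descent_coeff V par) k
      = win 1 m (ext (descent_coeff V parG)) k + ext (descent_coeff V parS) k" for k
  proof -
    have "card N * ext (descent_coeff V par) k
        = (\<Sum>w\<in>labelings V. card {y\<in>N. int (des V parG w) + int (cw w y) = k})"
      unfolding ext_card by (rule K1)
    also have "\<dots> = (\<Sum>w\<in>labelings V.
        (if 1 \<le> k - int (des V parG w) \<and> k - int (des V parG w) \<le> 1 + int m then 1 else 0)
        + (if k = int (des V parS w) then 1 else 0))"
    proof (intro sum.cong refl)
      fix w assume "w \<in> labelings V"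
      show "card {y\<in>N. int (des V parG w) + int (cw w y) = k} =
        (if 1 \<le> k - int (des V parG w) \<and> k - int (des V parG w) \<le> 1 + int m then 1 else 0)
        + (if k = int (des V parS w) then 1 else 0)"
        unfolding count_nonroot[OF p \<open>w \<in> labelings V\<close>] cm by (rule refl)
    qed
    also have "\<dots> = (\<Sum>w\<in>labelings V.
        (if 1 \<le> k - int (des V parG w) \<and> k - int (des V parG w) \<le> 1 + int m then 1 else 0))
        + (\<Sum>w\<in>labelings V. if k = int (des V parS w) then 1 else 0)"
      by (rule sum.distrib)
    also have "(\<Sum>w\<in>labelings V.
        (if 1 \<le> k - int (des V parG w) \<and> k - int (des V parG w) \<le> 1 + int m then 1 else 0))
        = win 1 m (ext (descent_coeff V parG)) k"
      unfolding win_def ext_card using win_count[OF finL, where m=m and d="des V parG" and k=k and lo=1] by simp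
    also have "(\<Sum>w\<in>labelings V. if k = int (des V parS w) then 1 else 0) = ext (descent_coeff V parS) k"
      unfolding ext_card using finL by (simp add: card_filter_sum eq_commute)
    finally show ?thesis .
  qed
  have e: "int (num_edges V parG) + 2 * 1 + int m = int (num_edges V par)"
    using edgesG p cm by simp
  have "SU (int (num_edges V parG) + 2 * 1 + int m) (win 1 m (ext (descent_coeff V parG)))"
    by (rule SU_win[OF IG]) simp
  then have A: "SU (int (num_edges V par)) (win 1 m (ext (descent_coeff V parG)))" using e by simp
  have B: "SU (int (num_edges V par)) (ext (descent_coeff V parS))" using IS edgesS p by simp
  have "SU (int (num_edges V par)) (\<lambda>k. card N * ext (descent_coeff V par) k)"
    using SU_add[OF A B] id by simp
  then show ?thesis by (rule SU_cancel) (simp add: cardN)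
qed

lemma step_root:
  assumes p: "par u = None"
    and IG: "SU (int (num_edges V parG)) (ext (descent_coeff V parG))"
  shows "SU (int (num_edges V par)) (ext (descent_coeff V par))"
proof -
  have finL: "finite (labelings V)" using lab_finite finV by blast
  define m where "m = card C"
  have id: "card N * ext (descent_coeff V par) k = win 0 m (ext (descent_coeff V parG)) k" for k
  proof -
    have "card N * ext (descent_coeff V par) k
        = (\<Sum>w\<in>labelings V. card {y\<in>N. int (des V parG w) + int (cw w y) = k})"
      unfolding ext_card by (rule K1)
    also have "\<dots> = (\<Sum>w\<in>labelings V.
        (if 0 \<le> k - int (des V parG w) \<and> k - int (des V parG w) \<le> 0 + int m then 1 else 0))"
    proof (intro sum.cong refl)
      fix w assume "w \<in> labelings V"
      show "card {y\<in>N. int (des V parG w) + int (cw w y) = k} =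
        (if 0 \<le> k - int (des V parG w) \<and> k - int (des V parG w) \<le> 0 + int m then 1 else 0)"
        unfolding count_root[OF p \<open>w \<in> labelings V\<close>] m_def by simp
    qed
    also have "\<dots> = win 0 m (ext (descent_coeff V parG)) k"
      unfolding win_def ext_card using win_count[OF finL, where m=m and d="des V parG" and k=k and lo=0] by simp
    finally show ?thesis .
  qed
  have e: "int (num_edges V parG) + 2 * 0 + int m = int (num_edges V par)"
    using edgesG p unfolding m_def by simp
  have "SU (int (num_edges V parG) + 2 * 0 + int m) (win 0 m (ext (descent_coeff V parG)))"
    by (rule SU_win[OF IG]) simp
  then have "SU (int (num_edges V par)) (\<lambda>k. card N * ext (descent_coeff V par) k)"
    using e id by simp
  then show ?thesis by (rule SU_cancel) (simp add: cardN)
qed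

end


lemma meas_lt:
  fixes c c' e e' n :: nat
  assumes "c' < c" "e' \<le> n"
  shows "c' * (n + 1) + e' < c * (n + 1) + e"
proof -
  have "(c' + 1) * (n + 1) \<le> c * (n + 1)" using assms(1) by (intro mult_le_mono1) simp
  then show ?thesis using assms(2) by (simp add: algebra_simps)
qed

lemma num_edges_le: "finite V \<Longrightarrow> num_edges V q \<le> card V"
  unfolding num_edges_def by (rule card_mono) auto

lemma main_SU:
  assumes "rooted_forest V par"
  shows "SU (int (num_edges V par)) (ext (descent_coeff V par))"
  using assms
proof (induction "card (intern V par) * (card V + 1) + num_edges V par" arbitrary: par rule: less_induct)
  case less
  have finV: "finite V" using less.prems unfolding rooted_forest_def by simp
  have parV: "\<And>v z. v \<in> V \<Longrightarrow> par v = Some z \<Longrightarrow> z \<in> V" using less.prems unfolding rooted_forest_def by blast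
  have acy: "acyclic {(v, z). v \<in> V \<and> par v = Some z}" using less.prems unfolding rooted_forest_def by simp
  have finI: "finite (intern V q)" for q using finV unfolding intern_def by simp
  show ?case
  proof (cases "\<exists>v\<in>V. par v \<noteq> None")
    case False
    have des0: "des V par w = 0" for w
    proof -
      have "descent_set V par w = {}" using False unfolding descent_set_def by auto
      then show ?thesis unfolding des_def by simp
    qed
    have ne0: "num_edges V par = 0"
    proof -
      have "{v\<in>V. par v \<noteq> None} = {}" using False by auto
      then show ?thesis unfolding num_edges_def by (metis card.empty)
    qed
    have dc: "ext (descent_coeff V par) k = (if k = 0 then card (labelings V) else 0)" for k
    proof -
      have "{w \<in> labelings V. int (des V par w) = k} = (if k = 0 then labelings V else {})"
        using des0 by auto
      then show ?thesis unfolding ext_card by simp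
    qed
    show ?thesis unfolding ne0 SU_def dc by simp
  next
    case True
    define S where "S = {x\<in>V. \<exists>y\<in>V. par y = Some x}"
    have finR: "finite {(v, z). v \<in> V \<and> par v = Some z}"
    proof (rule finite_subset)
      show "{(v, z). v \<in> V \<and> par v = Some z} \<subseteq> V \<times> V" using parV by auto
      show "finite (V \<times> V)" using finV by simp
    qed
    have wfR: "wf {(v, z). v \<in> V \<and> par v = Some z}" using finite_acyclic_wf[OF finR acy] .
    obtain v z where vz: "v \<in> V" "par v = Some z" using True by auto
    have zS: "z \<in> S" unfolding S_def using vz parV by blast
    obtain u where uS: "u \<in> S" and umin: "\<And>y. (y, u) \<in> {(v, z). v \<in> V \<and> par v = Some z} \<Longrightarrow> y \<notin> S"
      using wf_eq_minimal[THEN iffD1, OF wfR, rule_format, OF zS] by blast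
    interpret P: pend V par u
    proof
      show "rooted_forest V par" by (rule less.prems)
      show "u \<in> V" using uS unfolding S_def by simp
      show "\<exists>c\<in>V. par c = Some u" using uS unfolding S_def by simp
      show "\<And>c y. c \<in> V \<Longrightarrow> par c = Some u \<Longrightarrow> y \<in> V \<Longrightarrow> par y \<noteq> Some c"
        using umin unfolding S_def by blast
    qed
    have IG: "SU (int (num_edges V P.parG)) (ext (descent_coeff V P.parG))"
      if "card (intern V P.parG) * (card V + 1) + num_edges V P.parG
          < card (intern V par) * (card V + 1) + num_edges V par"
      using less.hyps[OF that P.parG_forest] .
    show ?thesis
    proof (cases "par u")
      case None
      have c1: "card (intern V P.parG) \<le> card (intern V par)"
        using P.internG finI by (intro card_mono) auto
      have c2: "num_edges V P.parG < num_edges V par" using P.edgesG None P.cardCpos by simp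
      have "card (intern V P.parG) * (card V + 1) + num_edges V P.parG
          < card (intern V par) * (card V + 1) + num_edges V par"
        by (rule add_le_less_mono[OF mult_le_mono1[OF c1] c2])
      then show ?thesis using P.step_root[OF None] IG by blast
    next
      case (Some p)
      have nn: "par u \<noteq> None" using Some by simp
      have c1: "card (intern V P.parG) < card (intern V par)"
      proof (rule psubset_card_mono)
        show "finite (intern V par)" by (rule finI)
        show "intern V P.parG \<subset> intern V par" using P.internG P.internG_u[OF nn] by blast
      qed
      have c3: "card (intern V P.parS) < card (intern V par)"
      proof (rule psubset_card_mono)
        show "finite (intern V par)" by (rule finI)
        show "intern V P.parS \<subset> intern V par" using P.internS[OF nn] P.internG_u[OF nn] by blast
      qed
      have mG: "card (intern V P.parG) * (card V + 1) + num_edges V P.parG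
          < card (intern V par) * (card V + 1) + num_edges V par"
        by (rule meas_lt[OF c1 num_edges_le[OF finV]])
      have mS: "card (intern V P.parS) * (card V + 1) + num_edges V P.parS
          < card (intern V par) * (card V + 1) + num_edges V par"
        by (rule meas_lt[OF c3 num_edges_le[OF finV]])
      have IS: "SU (int (num_edges V P.parS)) (ext (descent_coeff V P.parS))"
        using less.hyps[OF mS P.parS_forest[OF Some]] .
      show ?thesis using P.step_nonroot[OF Some IG[OF mG] IS] .
    qed
  qed
qed

theorem theorem2p3:
  fixes V :: "'a set" and par :: "'a \<Rightarrow> 'a option"
  assumes "rooted_forest V par"
  shows "unimodal_upto (descent_coeff V par) (num_edges V par)"
  using SU_unimodal main_SU assms by blast

end
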